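(* Let $\Omega$ be a topological space and let $X$ be a locally convex topological vector space whose topology is given by a family $\mathfrak{A}$ of seminorms. Let $V \subset F(\Omega, \mathbb{R}_+)$, $A \subset C(\Omega, \mathbb{C})$, $W \subset F(\Omega, X)$ and $f \in F(\Omega, X)$. Assume $A$ is a multiplier of $W$ and that $f - g \in FV_{b}(\Omega, X)$ for every $g \in W$. Then for each $p \in \mathfrak{A}$ and $v \in V$ there is an $(A, v)$-antisymmetric $z$-filter $\mathcal{F}$ on $\Omega$ such that \[ \inf_{F \in \mathcal{F}} d_{v, p, F}(f, W) = d_{v, p, \Omega}(f, W). \] Moreover, $\mathcal{F}$ can be chosen maximal in the following sense: if $\mathcal{E}$ is a $z$-filter on $\Omega$ with $\mathcal{F} \subset \mathcal{E}$ and $\inf_{E \in \mathcal{E}} d_{v, p, E}(f, W) = d_{v, p, \Omega}(f, W)$, then $\mathcal{E} = \mathcal{F}$.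
   Context: Topological spaces are not assumed Hausdorff. $F(\Omega,X)$ denotes all functions $\Omega\to X$, $\mathbb{R}_+=[0,\infty)$. For $p\in\mathfrak{A}$, $v\in F(\Omega,\mathbb{R}_+)$, $f\in F(\Omega,X)$, $F\subset\Omega$: $|f|_{v,p,F}=\sup\{v(x)p(f(x)):x\in F\}$, and for $W\subset F(\Omega,X)$, $d_{v,p,F}(f,W)=\inf\{|f-g|_{v,p,F}:g\in W\}$. $FV_b(\Omega,X)=\{f\in F(\Omega,X): \sup_{x\in\Omega}v(x)p(f(x))<\infty \text{ for all } v\in V,\ p\in\mathfrak{A}\}$. A zero-set of $\Omega$ is a set $h^{-1}(0)$ with $h\in C(\Omega,\mathbb{R})$; $Z(\Omega)$ is the set of zero-sets. A $z$-filter on $\Omega$ is a nonempty $\mathcal{F}\subset Z(\Omega)$ with $\emptyset\notin\mathcal{F}$, closed under finite intersections, and such that $Z\in\mathcal{F}$, $Z'\in Z(\Omega)$, $Z\subset Z'$ imply $Z'\in\mathcal{F}$. For $v\in F(\Omega,\mathbb{R}_+)$, $\mathrm{supp}\, v$ is the closure of $\{x:v(x)\neq 0\}$. A $z$-filter $\mathcal{F}$ is $(A,v)$-antisymmetric if every $F\in\mathcal{F}$ meets $\mathrm{supp}\,v$ and, for each $\phi\in A$ with $\bigcap_{F\in\mathcal{F}}\overline{\phi(F\cap\mathrm{supp}\,v)}\subset[0,1]$ (closures taken in the one-point compactification $\mathbb{C}\cup\{\infty\}$), this intersection is a single point. A function $\varphi\in F(\Omega,\mathbb{C})$ is a multiplier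 of $W$ if $\varphi f+(1-\varphi)g\in W$ for all $f,g\in W$; $A$ is a multiplier of $W$ if each $\varphi\in A$ is. *)

theory Defs
  imports "HOL-Analysis.Analysis"
begin

definition seminorm :: "(complex \<Rightarrow> 'b::ab_group_add \<Rightarrow> 'b) \<Rightarrow> ('b \<Rightarrow> real) \<Rightarrow> bool" where
  "seminorm smul p \<longleftrightarrow> (\<forall>x. 0 \<le> p x) \<and> (\<forall>x y. p (x + y) \<le> p x + p y)
     \<and> (\<forall>c x. p (smul c x) = cmod c * p x)"

text \<open>The one-point compactification of the complex plane, with None as the point at infinity.\<close>
definition ext_plane :: "complex option topology" where
  "ext_plane = topology (\<lambda>U. open (Some -` U) \<and> (None \<in> U \<longrightarrow> compact (- (Some -` U))))"

lemma istopology_ext_plane: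
  "istopology (\<lambda>U::complex option set. open (Some -` U) \<and> (None \<in> U \<longrightarrow> compact (- (Some -` U))))"
  unfolding istopology_def
proof (rule conjI; intro allI impI)
  fix S T :: "complex option set"
  assume S: "open (Some -` S) \<and> (None \<in> S \<longrightarrow> compact (- (Some -` S)))"
     and T: "open (Some -` T) \<and> (None \<in> T \<longrightarrow> compact (- (Some -` T)))"
  show "open (Some -` (S \<inter> T)) \<and> (None \<in> S \<inter> T \<longrightarrow> compact (- (Some -` (S \<inter> T))))"
  proof
    show "open (Some -` (S \<inter> T))" using S T by (simp add: vimage_Int open_Int)
    show "None \<in> S \<inter> T \<longrightarrow> compact (- (Some -` (S \<inter> T)))"
    proof
      assume "None \<in> S \<inter> T"
      then have "compact (- (Some -` S))" "compact (- (Some -` T))" using S T by auto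
      then have "compact (- (Some -` S) \<union> - (Some -` T))" by (rule compact_Un)
      then show "compact (- (Some -` (S \<inter> T)))" by (simp add: vimage_Int)
    qed
  qed
next
  fix K :: "complex option set set"
  assume K: "\<forall>U\<in>K. open (Some -` U) \<and> (None \<in> U \<longrightarrow> compact (- (Some -` U)))"
  have o: "open (Some -` \<Union>K)" using K by (auto simp: vimage_Union)
  moreover have "None \<in> \<Union>K \<longrightarrow> compact (- (Some -` \<Union>K))"
  proof
    assume "None \<in> \<Union>K"
    then obtain U where U: "U \<in> K" "None \<in> U" by blast
    then have c: "compact (- (Some -` U))" using K by blast
    have "- (Some -` \<Union>K) \<subseteq> - (Some -` U)" using U by auto
    moreover have "closed (- (Some -` \<Union>K))" using o by (simp add: closed_def)
    ultimately show "compact (- (Some -` \<Union>K))" using c compact_Int_closed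
      by (metis inf.absorb_iff2)
  qed
  ultimately show "open (Some -` \<Union>K) \<and> (None \<in> \<Union>K \<longrightarrow> compact (- (Some -` \<Union>K)))" by blast
qed

definition wsup :: "('a \<Rightarrow> real) \<Rightarrow> ('b \<Rightarrow> real) \<Rightarrow> 'a set \<Rightarrow> ('a \<Rightarrow> 'b) \<Rightarrow> ennreal" where
  "wsup v p F f = (SUP x\<in>F. ennreal (v x * p (f x)))"

definition wdist :: "('a \<Rightarrow> real) \<Rightarrow> ('b::ab_group_add \<Rightarrow> real) \<Rightarrow> 'a set \<Rightarrow> ('a \<Rightarrow> 'b) \<Rightarrow> ('a \<Rightarrow> 'b) set \<Rightarrow> ennreal" where
  "wdist v p F f W = (INF g\<in>W. wsup v p F (\<lambda>x. f x - g x))"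

definition FVb :: "('a \<Rightarrow> real) set \<Rightarrow> ('b \<Rightarrow> real) set \<Rightarrow> ('a \<Rightarrow> 'b) set" where
  "FVb V \<A> = {f. \<forall>v\<in>V. \<forall>p\<in>\<A>. bdd_above ((\<lambda>x. v x * p (f x)) ` UNIV)}"

definition zero_sets :: "'a::topological_space set set" where
  "zero_sets = {h -` {0} | h :: 'a \<Rightarrow> real. continuous_on UNIV h}"

definition z_filter :: "'a::topological_space set set \<Rightarrow> bool" where
  "z_filter \<F> \<longleftrightarrow> \<F> \<subseteq> zero_sets \<and> \<F> \<noteq> {} \<and> {} \<notin> \<F>
     \<and> (\<forall>F\<in>\<F>. \<forall>G\<in>\<F>. F \<inter> G \<in> \<F>)
     \<and> (\<forall>Z\<in>\<F>. \<forall>Z'\<in>zero_sets. Z \<subseteq> Z' \<longrightarrow> Z' \<in> \<F>)"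

definition supp :: "('a::topological_space \<Rightarrow> real) \<Rightarrow> 'a set" where
  "supp v = closure {x. v x \<noteq> 0}"

definition antisymmetric_zf :: "('a::topological_space \<Rightarrow> complex) set \<Rightarrow> ('a \<Rightarrow> real) \<Rightarrow> 'a set set \<Rightarrow> bool" where
  "antisymmetric_zf A v \<F> \<longleftrightarrow> z_filter \<F> \<and> (\<forall>F\<in>\<F>. F \<inter> supp v \<noteq> {}) \<and>
     (\<forall>\<phi>\<in>A. let S = (\<Inter>F\<in>\<F>. ext_plane closure_of (Some ` \<phi> ` (F \<inter> supp v)))
             in S \<subseteq> Some ` {z. Im z = 0 \<and> 0 \<le> Re z \<and> Re z \<le> 1} \<longrightarrow> (\<exists>c. S = {c}))"

definition multiplier :: "(complex \<Rightarrow> 'b::ab_group_add \<Rightarrow> 'b) \<Rightarrow> ('a \<Rightarrow> complex) \<Rightarrow> ('a \<Rightarrow> 'b) set \<Rightarrow> bool" where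
  "multiplier smul \<phi> W \<longleftrightarrow> (\<forall>f\<in>W. \<forall>g\<in>W. (\<lambda>x. smul (\<phi> x) (f x) + smul (1 - \<phi> x) (g x)) \<in> W)"

end

theory Submission
  imports Defs
begin


lemma zfD:
  assumes "z_filter \<F>"
  shows zf_sub: "\<F> \<subseteq> zero_sets" and zf_ne: "\<F> \<noteq> {}" and zf_empty: "{} \<notin> \<F>"
    and zf_Int: "\<And>F G. F \<in> \<F> \<Longrightarrow> G \<in> \<F> \<Longrightarrow> F \<inter> G \<in> \<F>"
    and zf_up: "\<And>Z Z'. Z \<in> \<F> \<Longrightarrow> Z' \<in> zero_sets \<Longrightarrow> Z \<subseteq> Z' \<Longrightarrow> Z' \<in> \<F>"
proof -
  have A: "\<F> \<subseteq> zero_sets \<and> \<F> \<noteq> {} \<and> {} \<notin> \<F>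
     \<and> (\<forall>F\<in>\<F>. \<forall>G\<in>\<F>. F \<inter> G \<in> \<F>)
     \<and> (\<forall>Z\<in>\<F>. \<forall>Z'\<in>zero_sets. Z \<subseteq> Z' \<longrightarrow> Z' \<in> \<F>)"
    using assms unfolding z_filter_def .
  show "\<F> \<subseteq> zero_sets" using A by (elim conjE)
  show "\<F> \<noteq> {}" using A by (elim conjE)
  show "{} \<notin> \<F>" using A by (elim conjE)
  show "\<And>F G. F \<in> \<F> \<Longrightarrow> G \<in> \<F> \<Longrightarrow> F \<inter> G \<in> \<F>"
  proof -
    fix F G assume "F \<in> \<F>" "G \<in> \<F>"
    moreover have "\<forall>F\<in>\<F>. \<forall>G\<in>\<F>. F \<inter> G \<in> \<F>" using A by (elim conjE)
    ultimately show "F \<inter> G \<in> \<F>" by blast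
  qed
  show "\<And>Z Z'. Z \<in> \<F> \<Longrightarrow> Z' \<in> zero_sets \<Longrightarrow> Z \<subseteq> Z' \<Longrightarrow> Z' \<in> \<F>"
  proof -
    fix Z Z' assume "Z \<in> \<F>" "Z' \<in> zero_sets" "Z \<subseteq> Z'"
    moreover have "\<forall>Z\<in>\<F>. \<forall>Z'\<in>zero_sets. Z \<subseteq> Z' \<longrightarrow> Z' \<in> \<F>" using A by (elim conjE)
    ultimately show "Z' \<in> \<F>" by blast
  qed
qed

lemma zfI:
  assumes "\<F> \<subseteq> zero_sets" "\<F> \<noteq> {}" "{} \<notin> \<F>"
    "\<And>F G. F \<in> \<F> \<Longrightarrow> G \<in> \<F> \<Longrightarrow> F \<inter> G \<in> \<F>"
    "\<And>Z Z'. Z \<in> \<F> \<Longrightarrow> Z' \<in> zero_sets \<Longrightarrow> Z \<subseteq> Z' \<Longrightarrow> Z' \<in> \<F>"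
  shows "z_filter \<F>"
  unfolding z_filter_def
proof (intro conjI ballI impI)
  fix F G assume "F \<in> \<F>" "G \<in> \<F>" then show "F \<inter> G \<in> \<F>" by (rule assms(4))
next
  fix Z Z' assume "Z \<in> \<F>" "Z' \<in> zero_sets" "Z \<subseteq> Z'" then show "Z' \<in> \<F>" by (rule assms(5))
qed (fact assms(1-3))+


lemma openin_ext_plane:
  "openin ext_plane U \<longleftrightarrow> open (Some -` U) \<and> (None \<in> U \<longrightarrow> compact (- (Some -` U)))"
  unfolding ext_plane_def using istopology_ext_plane by simp

lemma topspace_ext_plane [simp]: "topspace ext_plane = UNIV"
  unfolding topspace_def by (auto simp: openin_ext_plane intro!: exI[of _ UNIV])

lemma openin_ext_Some: "open T \<Longrightarrow> openin ext_plane (Some ` T)"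
  by (auto simp: openin_ext_plane inj_vimage_image_eq)

lemma openin_ext_compl: "compact C \<Longrightarrow> openin ext_plane (- (Some ` C))"
proof -
  assume c: "compact C"
  have e: "Some -` (- (Some ` C)) = - C" by auto
  show ?thesis unfolding openin_ext_plane e using c compact_imp_closed by (auto simp: open_Compl)
qed

lemma compact_space_ext_plane: "compact_space ext_plane"
  unfolding compact_space_alt
proof (intro allI impI)
  fix \<U> :: "complex option set set"
  assume a: "(\<forall>U\<in>\<U>. openin ext_plane U) \<and> topspace ext_plane \<subseteq> \<Union>\<U>"
  then obtain B0 where B0: "B0 \<in> \<U>" "None \<in> B0" by auto
  have K: "compact (- (Some -` B0))" using a B0 by (auto simp: openin_ext_plane)
  have cov: "- (Some -` B0) \<subseteq> \<Union>((\<lambda>B. Some -` B) ` \<U>)"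
  proof
    fix z assume "z \<in> - (Some -` B0)"
    from a have "Some z \<in> \<Union>\<U>" by auto
    then show "z \<in> \<Union>((\<lambda>B. Some -` B) ` \<U>)" by auto
  qed
  have op: "\<And>B. B \<in> (\<lambda>B. Some -` B) ` \<U> \<Longrightarrow> open B" using a by (auto simp: openin_ext_plane)
  obtain \<T>' where T': "\<T>' \<subseteq> (\<lambda>B. Some -` B) ` \<U>" "finite \<T>'" "- (Some -` B0) \<subseteq> \<Union>\<T>'"
    using compactE[OF K cov op] by blast
  then obtain \<V> where V: "\<V> \<subseteq> \<U>" "finite \<V>" "\<T>' = (\<lambda>B. Some -` B) ` \<V>"
    by (meson finite_subset_image)
  show "\<exists>\<F>. finite \<F> \<and> \<F> \<subseteq> \<U> \<and> topspace ext_plane \<subseteq> \<Union>\<F>"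
  proof (intro exI[of _ "insert B0 \<V>"] conjI)
    show "topspace ext_plane \<subseteq> \<Union> (insert B0 \<V>)"
    proof
      fix c :: "complex option" assume "c \<in> topspace ext_plane"
      show "c \<in> \<Union> (insert B0 \<V>)"
      proof (cases c)
        case None then show ?thesis using B0 by auto
      next
        case (Some z)
        then show ?thesis using T'(3) V(3) by (cases "z \<in> Some -` B0") auto
      qed
    qed
  qed (use V B0 in auto)
qed

lemma zfilter_Inter:
  assumes "z_filter \<F>" "finite \<H>" "\<H> \<noteq> {}" "\<H> \<subseteq> \<F>"
  shows "\<Inter>\<H> \<in> \<F>"
  using assms(2,3,4)
proof (induction rule: finite_ne_induct)
  case (singleton x) then show ?case by auto
next
  case (insert x F)
  then show ?case using zf_Int[OF assms(1)] by simp
qed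

lemma ext_fip:
  assumes zf: "z_filter \<F>"
    and mono: "\<And>F F'. F \<subseteq> F' \<Longrightarrow> G F \<subseteq> G F'"
    and K: "closedin ext_plane K"
    and ne: "\<And>F. F \<in> \<F> \<Longrightarrow> ext_plane closure_of (G F) \<inter> K \<noteq> {}"
  shows "(\<Inter>F\<in>\<F>. ext_plane closure_of (G F)) \<inter> K \<noteq> {}"
proof -
  let ?U = "(\<lambda>F. ext_plane closure_of (G F) \<inter> K) ` \<F>"
  have Une: "\<Inter>?U \<noteq> {}"
    using compact_space_ext_plane unfolding compact_space_fip
  proof (elim allE impE)
    show "(\<forall>C\<in>?U. closedin ext_plane C) \<and> (\<forall>\<G>. finite \<G> \<and> \<G> \<subseteq> ?U \<longrightarrow> \<Inter>\<G> \<noteq> {})"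
    proof (intro conjI allI impI ballI)
      fix C assume "C \<in> ?U" then show "closedin ext_plane C" using K by auto
    next
      fix \<G> assume g: "finite \<G> \<and> \<G> \<subseteq> ?U"
      then obtain \<H> where H: "\<H> \<subseteq> \<F>" "finite \<H>" "\<G> = (\<lambda>F. ext_plane closure_of (G F) \<inter> K) ` \<H>"
        by (meson finite_subset_image)
      show "\<Inter>\<G> \<noteq> {}"
      proof (cases "\<H> = {}")
        case True then show ?thesis using H by auto
      next
        case False
        then have I: "\<Inter>\<H> \<in> \<F>" using zfilter_Inter[OF zf H(2) _ H(1)] by auto
        have sub: "ext_plane closure_of (G (\<Inter>\<H>)) \<inter> K \<subseteq> ext_plane closure_of (G H) \<inter> K"
          if "H \<in> \<H>" for H
        proof -
          have "G (\<Inter>\<H>) \<subseteq> G H" using that by (intro mono) auto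
          then show ?thesis using closure_of_mono by blast
        qed
        have "ext_plane closure_of (G (\<Inter>\<H>)) \<inter> K \<subseteq> \<Inter>\<G>"
          unfolding H(3) by (rule INF_greatest) (rule sub)
        then show ?thesis using ne[OF I] by blast
      qed
    qed
  next
    show "\<Inter>?U \<noteq> {} \<Longrightarrow> \<Inter>?U \<noteq> {}" by assumption
  qed
  have ne2: "\<F> \<noteq> {}" using zf_ne[OF zf] .
  have eq: "\<Inter>?U = (\<Inter>F\<in>\<F>. ext_plane closure_of (G F)) \<inter> K"
    using ne2 by blast
  show ?thesis using Une unfolding eq .
qed



lemma zero_setsI: assumes "continuous_on UNIV (h :: 'a::topological_space \<Rightarrow> real)" shows "h -` {0} \<in> zero_sets"
  unfolding zero_sets_def mem_Collect_eq by (intro exI[of _ h] conjI refl assms)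

lemma zero_sets_UNIV: "(UNIV :: 'a::topological_space set) \<in> zero_sets"
proof -
  have "(\<lambda>x::'a. 0::real) -` {0} = UNIV" by auto
  then show ?thesis using zero_setsI[of "\<lambda>x::'a. 0::real"] by auto
qed

lemma zero_sets_Int:
  assumes "Z1 \<in> zero_sets" "Z2 \<in> zero_sets" shows "Z1 \<inter> Z2 \<in> zero_sets"
proof -
  obtain h1 :: "'a \<Rightarrow> real" where h1: "continuous_on UNIV h1" "Z1 = h1 -` {0}"
    using assms(1) unfolding zero_sets_def mem_Collect_eq by (elim exE conjE) simp
  obtain h2 :: "'a \<Rightarrow> real" where h2: "continuous_on UNIV h2" "Z2 = h2 -` {0}"
    using assms(2) unfolding zero_sets_def mem_Collect_eq by (elim exE conjE) simp
  have e: "(\<lambda>x. \<bar>h1 x\<bar> + \<bar>h2 x\<bar>) -` {0} = Z1 \<inter> Z2"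
    using h1 h2 by (auto simp: add_nonneg_eq_0_iff)
  have c: "continuous_on UNIV (\<lambda>x. \<bar>h1 x\<bar> + \<bar>h2 x\<bar>)"
    using h1 h2 by (intro continuous_intros) auto
  show ?thesis using zero_setsI[OF c] unfolding e .
qed

lemma zero_sets_le:
  fixes g :: "'a::topological_space \<Rightarrow> real"
  assumes "continuous_on UNIV g" shows "{x. g x \<le> c} \<in> zero_sets"
proof -
  have e: "(\<lambda>x. max (g x - c) 0) -` {0} = {x. g x \<le> c}" by (auto simp: max_def split: if_splits)
  have cc: "continuous_on UNIV (\<lambda>x. max (g x - c) 0)"
    using assms by (intro continuous_intros) auto
  show ?thesis using zero_setsI[OF cc] unfolding e .
qed

lemma zero_sets_eq:
  fixes g :: "'a::topological_space \<Rightarrow> real"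
  assumes "continuous_on UNIV g" shows "{x. g x = c} \<in> zero_sets"
proof -
  have e: "(\<lambda>x. g x - c) -` {0} = {x. g x = c}" by auto
  have cc: "continuous_on UNIV (\<lambda>x. g x - c)"
    using assms by (intro continuous_intros) auto
  show ?thesis using zero_setsI[OF cc] unfolding e .
qed

lemma zfilter_UNIV: "z_filter \<F> \<Longrightarrow> UNIV \<in> \<F>"
proof -
  assume z: "z_filter \<F>"
  then obtain Z where "Z \<in> \<F>" using zf_ne by blast
  then show ?thesis using zf_up[OF z _ zero_sets_UNIV] by blast
qed

lemma wsup_mono: "F \<subseteq> F' \<Longrightarrow> wsup v p F h \<le> wsup v p F' h"
  unfolding wsup_def by (rule SUP_subset_mono) auto

lemma wdist_mono: "F \<subseteq> F' \<Longrightarrow> wdist v p F f W \<le> wdist v p F' f W"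
  unfolding wdist_def by (intro INF_mono) (auto intro: wsup_mono)

lemma wsup_le: "(\<And>x. x \<in> F \<Longrightarrow> v x * p (h x) \<le> r) \<Longrightarrow> wsup v p F h \<le> ennreal r"
  unfolding wsup_def by (rule SUP_least) (auto intro: ennreal_leI)

lemma wsup_upper: "x \<in> F \<Longrightarrow> ennreal (v x * p (h x)) \<le> wsup v p F h"
  unfolding wsup_def by (rule SUP_upper)

lemma wdist_le: "g \<in> W \<Longrightarrow> wdist v p F f W \<le> wsup v p F (\<lambda>x. f x - g x)"
  unfolding wdist_def by (rule INF_lower)



context
  fixes smul :: "complex \<Rightarrow> 'b::ab_group_add \<Rightarrow> 'b"
  assumes vs: "vector_space smul"
begin

interpretation V: vector_space smul by (rule vs)

lemma multiplier_one: "multiplier smul (\<lambda>x. 1) W"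
  unfolding multiplier_def by simp

lemma multiplier_compl: "multiplier smul \<phi> W \<Longrightarrow> multiplier smul (\<lambda>x. 1 - \<phi> x) W"
  unfolding multiplier_def by (simp add: add.commute)

lemma multiplier_mult:
  assumes "multiplier smul \<phi> W" "multiplier smul \<psi> W"
  shows "multiplier smul (\<lambda>x. \<phi> x * \<psi> x) W"
  unfolding multiplier_def
proof (intro ballI)
  fix f g assume fg: "f \<in> W" "g \<in> W"
  let ?h = "\<lambda>x. smul (\<psi> x) (f x) + smul (1 - \<psi> x) (g x)"
  have m2: "\<forall>f\<in>W. \<forall>g\<in>W. (\<lambda>x. smul (\<psi> x) (f x) + smul (1 - \<psi> x) (g x)) \<in> W"
    using assms(2) unfolding multiplier_def .
  have h: "?h \<in> W" using bspec[OF bspec[OF m2 fg(1)] fg(2)] .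
  have m1: "\<forall>f\<in>W. \<forall>g\<in>W. (\<lambda>x. smul (\<phi> x) (f x) + smul (1 - \<phi> x) (g x)) \<in> W"
    using assms(1) unfolding multiplier_def .
  have "(\<lambda>x. smul (\<phi> x) (?h x) + smul (1 - \<phi> x) (g x)) \<in> W"
    using bspec[OF bspec[OF m1 h] fg(2)] .
  moreover have "smul (\<phi> x) (?h x) + smul (1 - \<phi> x) (g x)
      = smul (\<phi> x * \<psi> x) (f x) + smul (1 - \<phi> x * \<psi> x) (g x)" for x
  proof -
    have "smul (\<phi> x) (?h x) + smul (1 - \<phi> x) (g x)
        = smul (\<phi> x * \<psi> x) (f x) + (smul (\<phi> x * (1 - \<psi> x)) (g x) + smul (1 - \<phi> x) (g x))"
      by (simp add: V.scale_right_distrib V.scale_scale add.assoc)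
    also have "smul (\<phi> x * (1 - \<psi> x)) (g x) + smul (1 - \<phi> x) (g x) = smul (1 - \<phi> x * \<psi> x) (g x)"
      by (simp add: V.scale_left_distrib[symmetric] algebra_simps)
    finally show ?thesis .
  qed
  ultimately show "(\<lambda>x. smul (\<phi> x * \<psi> x) (f x) + smul (1 - \<phi> x * \<psi> x) (g x)) \<in> W" by simp
qed

lemma multiplier_pow:
  assumes "multiplier smul \<phi> W" shows "multiplier smul (\<lambda>x. \<phi> x ^ n) W"
proof (induction n)
  case 0 then show ?case using multiplier_one by simp
next
  case (Suc n) then show ?case using multiplier_mult[OF assms Suc] by simp
qed

lemma multiplier_Q:
  assumes "multiplier smul \<phi> W" shows "multiplier smul (\<lambda>x. (1 - \<phi> x ^ n) ^ m) W"
  by (rule multiplier_pow[OF multiplier_compl[OF multiplier_pow[OF assms]]])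

lemma decomp:
  "a - (smul c b1 + smul (1 - c) b2) = smul c (a - b1) + smul (1 - c) (a - b2)"
proof -
  have "a = smul c a + smul (1 - c) a" by (simp add: V.scale_left_distrib[symmetric])
  then have "a - (smul c b1 + smul (1 - c) b2) = smul c a + smul (1 - c) a - (smul c b1 + smul (1 - c) b2)"
    by simp
  also have "\<dots> = smul c (a - b1) + smul (1 - c) (a - b2)"
    by (simp add: V.scale_right_diff_distrib algebra_simps)
  finally show ?thesis .
qed

lemma seminorm_comb:
  assumes "seminorm smul p"
  shows "p (smul c y1 + smul d y2) \<le> cmod c * p y1 + cmod d * p y2"
proof -
  have "p (smul c y1 + smul d y2) \<le> p (smul c y1) + p (smul d y2)"
    using assms unfolding seminorm_def by blast
  moreover have "p (smul c y1) = cmod c * p y1" "p (smul d y2) = cmod d * p y2"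
    using assms unfolding seminorm_def by blast+
  ultimately show ?thesis by simp
qed

end



lemma poly_step:
  fixes s t \<eta> :: real
  assumes s0: "0 \<le> s" and st: "s < t" and t1: "t \<le> 1" and e0: "0 < \<eta>"
  obtains n m :: nat where "\<And>x. 0 \<le> x \<Longrightarrow> x \<le> s \<Longrightarrow> 1 - (1 - x^n)^m \<le> \<eta>"
    "\<And>x. t \<le> x \<Longrightarrow> x \<le> 1 \<Longrightarrow> (1 - x^n)^m \<le> \<eta>"
proof -
  define q where "q = s / t"
  have t0: "0 < t" using s0 st by linarith
  have q0: "0 \<le> q" and q1: "q < 1" using s0 st t0 by (auto simp: q_def divide_simps)
  have sq: "s \<le> q" using s0 t0 t1 unfolding q_def by (simp add: divide_simps mult_left_le)
  have "0 < min (\<eta>^2/2) (\<eta>/2)" using e0 by simp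
  then obtain n0 where n0: "q ^ n0 < min (\<eta>^2/2) (\<eta>/2)" using real_arch_pow_inv[OF _ q1] by blast
  define n where "n = Suc n0"
  have qn: "q ^ n < min (\<eta>^2/2) (\<eta>/2)"
  proof -
    have "q ^ n \<le> q ^ n0" unfolding n_def using q0 q1 by (simp add: mult_left_le_one_le)
    then show ?thesis using n0 by linarith
  qed
  have sn: "s ^ n \<le> q ^ n" using sq s0 by (simp add: power_mono)
  define tn where "tn = t ^ n"
  have tn0: "0 < tn" "tn \<le> 1" using t0 t1 unfolding tn_def by (auto simp: power_le_one)
  define m where "m = nat \<lceil>1 / (\<eta> * tn)\<rceil>"
  have m1: "1 / (\<eta> * tn) \<le> real m" unfolding m_def by linarith
  have m2: "real m < 1 / (\<eta> * tn) + 1" unfolding m_def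
    using e0 tn0 by (simp add: of_nat_nat) linarith
  have h: "1 \<le> real m * (\<eta> * tn)" using m1 e0 tn0 by (simp add: divide_simps)
  have "real m * (\<eta> * tn) = (real m * tn) * \<eta>" by (simp add: ac_simps)
  then have "1 \<le> (real m * tn) * \<eta>" using h by linarith
  then have mtn: "1 / \<eta> \<le> real m * tn" using e0 by (simp add: pos_divide_le_eq)
  show ?thesis
  proof
    fix x :: real assume x0: "0 \<le> x" and xs: "x \<le> s"
    define y where "y = x ^ n"
    have y0: "0 \<le> y" and ys: "y \<le> s ^ n" unfolding y_def using x0 xs by (auto simp: power_mono)
    have y1: "y \<le> 1" unfolding y_def using x0 xs st t1 by (intro power_le_one) auto
    have "1 + real m * (- y) \<le> (1 + - y) ^ m" using Bernoulli_inequality[of "- y" m] y1 by simp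
    then have "1 - (1 - y) ^ m \<le> real m * y" by simp
    also have "\<dots> \<le> real m * s ^ n" using ys by (simp add: mult_left_mono)
    also have "\<dots> \<le> (1 / (\<eta> * tn) + 1) * s ^ n"
      using m2 s0 by (intro mult_right_mono) auto
    also have "\<dots> = s ^ n / (\<eta> * tn) + s ^ n" by (simp add: algebra_simps)
    also have "s ^ n / (\<eta> * tn) = q ^ n / \<eta>"
      unfolding q_def tn_def using t0 e0 by (simp add: power_divide)
    also have "q ^ n / \<eta> + s ^ n \<le> \<eta>"
    proof -
      have "q ^ n / \<eta> \<le> \<eta> / 2" using qn e0 by (simp add: divide_simps power2_eq_square)
      then show ?thesis using sn qn by linarith
    qed
    finally show "1 - (1 - x ^ n) ^ m \<le> \<eta>" unfolding y_def .
  next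
    fix x :: real assume tx: "t \<le> x" and x1: "x \<le> 1"
    define y where "y = x ^ n"
    have yt: "tn \<le> y" and y1: "y \<le> 1" unfolding y_def tn_def using tx x1 t0 by (auto simp: power_mono power_le_one)
    have "(1 - y) ^ m \<le> (1 - tn) ^ m" using yt y1 by (intro power_mono) auto
    moreover have "(1 - tn) ^ m \<le> \<eta>"
    proof -
      have e1: "(1 - tn) * (1 + tn) = 1 - tn^2" by (simp add: power2_eq_square algebra_simps)
      have "(1 - tn) ^ m * (1 + tn) ^ m = (1 - tn^2) ^ m" unfolding e1[symmetric] by (rule power_mult_distrib[symmetric])
      also have "\<dots> \<le> 1" using tn0 by (intro power_le_one) (auto simp: power_le_one)
      finally have A: "(1 - tn) ^ m * (1 + tn) ^ m \<le> 1" .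
      have B: "1 + real m * tn \<le> (1 + tn) ^ m" using Bernoulli_inequality[of tn m] tn0 by simp
      have C: "1 + 1 / \<eta> \<le> (1 + tn) ^ m" using B mtn by linarith
      have D: "0 \<le> (1 - tn) ^ m" using tn0 by simp
      have "(1 - tn) ^ m * (1 + 1 / \<eta>) \<le> 1" using mult_left_mono[OF C D] A by linarith
      then have "(1 - tn) ^ m * (\<eta> + 1) \<le> \<eta>" using e0 by (simp add: field_simps)
      then have "(1 - tn) ^ m * \<eta> + (1 - tn) ^ m \<le> \<eta>" by (simp add: algebra_simps)
      moreover have "0 \<le> (1 - tn) ^ m * \<eta>" using D e0 by simp
      ultimately show ?thesis by linarith
    qed
    ultimately show "(1 - x ^ n) ^ m \<le> \<eta>" unfolding y_def by linarith
  qed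
qed


lemma poly_complex:
  fixes \<alpha> \<beta> \<eta> :: real
  assumes a0: "0 \<le> \<alpha>" and ab: "\<alpha> < \<beta>" and b1: "\<beta> \<le> 1" and e0: "0 < \<eta>"
  obtains n m :: nat and \<epsilon> :: real where "0 < \<epsilon>"
   "\<And>z t. 0 \<le> t \<Longrightarrow> t \<le> 1 \<Longrightarrow> cmod (z - of_real t) < \<epsilon> \<Longrightarrow>
      cmod ((1 - z^n)^m) + cmod (1 - (1 - z^n)^m) \<le> 1 + \<eta>"
   "\<And>z t. 0 \<le> t \<Longrightarrow> t \<le> 1 \<Longrightarrow> cmod (z - of_real t) < \<epsilon> \<Longrightarrow> Re z \<le> \<alpha> \<Longrightarrow>
      cmod (1 - (1 - z^n)^m) \<le> \<eta>"
   "\<And>z t. 0 \<le> t \<Longrightarrow> t \<le> 1 \<Longrightarrow> cmod (z - of_real t) < \<epsilon> \<Longrightarrow> \<beta> \<le> Re z \<Longrightarrow>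
      cmod ((1 - z^n)^m) \<le> \<eta>"
proof -
  define d0 where "d0 = (\<beta> - \<alpha>) / 3"
  have d0: "0 < d0" using ab unfolding d0_def by simp
  have e2: "0 < \<eta> / 2" using e0 by simp
  obtain n m :: nat where nm1: "\<And>x. 0 \<le> x \<Longrightarrow> x \<le> \<alpha> + d0 \<Longrightarrow> 1 - (1 - x^n)^m \<le> \<eta> / 2"
    and nm2: "\<And>x. \<beta> - d0 \<le> x \<Longrightarrow> x \<le> 1 \<Longrightarrow> (1 - x^n)^m \<le> \<eta> / 2"
  proof -
    have h1: "0 \<le> \<alpha> + d0" using a0 d0 by simp
    have h2: "\<alpha> + d0 < \<beta> - d0" using ab unfolding d0_def by (simp add: field_simps)
    have h3: "\<beta> - d0 \<le> 1" using b1 d0 by simp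
    show ?thesis by (rule poly_step[OF h1 h2 h3 e2]) (rule that; assumption)+
  qed
  define Q where "Q = (\<lambda>z::complex. (1 - z^n)^m)"
  have "continuous_on (cball 0 2) Q" unfolding Q_def by (intro continuous_intros)
  then have "uniformly_continuous_on (cball 0 2) Q" by (intro compact_uniformly_continuous) auto
  then obtain d where d: "0 < d"
    "\<And>x x'. x \<in> cball 0 2 \<Longrightarrow> x' \<in> cball 0 2 \<Longrightarrow> dist x' x < d \<Longrightarrow> dist (Q x') (Q x) < \<eta> / 2"
    unfolding uniformly_continuous_on_def using e2 by metis
  define \<epsilon> where "\<epsilon> = min d (min d0 1)"
  have eps: "0 < \<epsilon>" "\<epsilon> \<le> d" "\<epsilon> \<le> d0" "\<epsilon> \<le> 1" using d d0 unfolding \<epsilon>_def by auto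
  have key: "cmod (Q z - of_real ((1 - t^n)^m)) < \<eta> / 2"
    if t: "0 \<le> t" "t \<le> 1" and zt: "cmod (z - of_real t) < \<epsilon>" for z t
  proof -
    have ct: "cmod (complex_of_real t) \<le> 1" using t by simp
    have "cmod z \<le> cmod (complex_of_real t) + cmod (z - of_real t)" by (rule norm_triangle_sub)
    then have cz: "cmod z \<le> 2" using ct zt eps by linarith
    have "dist (Q z) (Q (of_real t)) < \<eta> / 2"
      using d(2)[of "of_real t" z] ct cz zt eps by (simp add: dist_norm)
    moreover have "Q (of_real t) = of_real ((1 - t^n)^m)" unfolding Q_def by simp
    ultimately show ?thesis by (simp add: dist_norm)
  qed
  have Qr: "0 \<le> (1 - t^n)^m" "(1 - t^n)^m \<le> (1::real)" if "0 \<le> t" "t \<le> 1" for t :: real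
  proof -
    have "t ^ n \<le> 1" "0 \<le> t ^ n" using that by (auto simp: power_le_one)
    then show "0 \<le> (1 - t^n)^m" "(1 - t^n)^m \<le> (1::real)" by (auto simp: power_le_one)
  qed
  have b1: "cmod (Q z) \<le> (1 - t^n)^m + \<eta> / 2" and b2: "cmod (1 - Q z) \<le> (1 - (1 - t^n)^m) + \<eta> / 2"
    if t: "0 \<le> t" "t \<le> 1" and zt: "cmod (z - of_real t) < \<epsilon>" for z t
  proof -
    define r where "r = (1 - t^n)^m"
    have k: "cmod (Q z - of_real r) < \<eta> / 2" using key[OF t zt] unfolding r_def .
    have r0: "0 \<le> r" "r \<le> 1" using Qr[OF t] unfolding r_def by auto
    have "cmod (Q z) \<le> cmod (complex_of_real r) + cmod (Q z - of_real r)" by (rule norm_triangle_sub)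
    moreover have "cmod (complex_of_real r) = r" using r0 by simp
    ultimately have "cmod (Q z) \<le> r + \<eta> / 2" using k by linarith
    then show "cmod (Q z) \<le> (1 - t^n)^m + \<eta> / 2" unfolding r_def .
    have "cmod (1 - Q z) \<le> cmod (complex_of_real (1 - r)) + cmod ((1 - Q z) - of_real (1 - r))" by (rule norm_triangle_sub)
    moreover have "cmod (complex_of_real (1 - r)) = 1 - r"
    proof -
      have "cmod (complex_of_real (1 - r)) = \<bar>1 - r\<bar>" by (rule norm_of_real)
      also have "\<dots> = 1 - r" using r0 by simp
      finally show ?thesis .
    qed
    moreover have "cmod ((1 - Q z) - of_real (1 - r)) = cmod (Q z - of_real r)"
    proof -
      have e: "(1 - Q z) - of_real (1 - r) = - (Q z - of_real r)" by simp
      show ?thesis unfolding e by (rule norm_minus_cancel)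
    qed
    ultimately have "cmod (1 - Q z) \<le> (1 - r) + \<eta> / 2" using k by linarith
    then show "cmod (1 - Q z) \<le> (1 - (1 - t^n)^m) + \<eta> / 2" unfolding r_def .
  qed
  have reb: "\<bar>Re z - t\<bar> < d0" if "cmod (z - of_real t) < \<epsilon>" for z t
  proof -
    have "\<bar>Re (z - of_real t)\<bar> \<le> cmod (z - of_real t)" by (rule abs_Re_le_cmod)
    then show ?thesis using that eps by simp
  qed
  show ?thesis
  proof (rule that[of \<epsilon> n m])
    show "0 < \<epsilon>" by (rule eps)
  next
    fix z t assume t: "0 \<le> (t::real)" "t \<le> 1" and zt: "cmod (z - of_real t) < \<epsilon>"
    show "cmod ((1 - z^n)^m) + cmod (1 - (1 - z^n)^m) \<le> 1 + \<eta>"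
      using b1[OF t zt] b2[OF t zt] unfolding Q_def by linarith
  next
    fix z t assume t: "0 \<le> (t::real)" "t \<le> 1" and zt: "cmod (z - of_real t) < \<epsilon>" and r: "Re z \<le> \<alpha>"
    have "t \<le> \<alpha> + d0" using reb[OF zt] r by linarith
    then have "1 - (1 - t^n)^m \<le> \<eta> / 2" using nm1 t by blast
    then show "cmod (1 - (1 - z^n)^m) \<le> \<eta>" using b2[OF t zt] unfolding Q_def by linarith
  next
    fix z t assume t: "0 \<le> (t::real)" "t \<le> 1" and zt: "cmod (z - of_real t) < \<epsilon>" and r: "\<beta> \<le> Re z"
    have "\<beta> - d0 \<le> t" using reb[OF zt] r by linarith
    then have "(1 - t^n)^m \<le> \<eta> / 2" using nm2 t by blast
    then show "cmod ((1 - z^n)^m) \<le> \<eta>" using b1[OF t zt] unfolding Q_def by linarith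
  qed
qed



lemma cont_cmod_diff: "continuous_on UNIV (\<phi> :: 'a::topological_space \<Rightarrow> complex) \<Longrightarrow>
  continuous_on UNIV (\<lambda>x. cmod (\<phi> x - c))"
  by (intro continuous_intros) auto

lemma closure_ofD:
  assumes "x \<in> X closure_of S" "x \<in> T" "openin X T" obtains y where "y \<in> S" "y \<in> T"
proof -
  have "\<forall>T. x \<in> T \<and> openin X T \<longrightarrow> (\<exists>y. y \<in> S \<and> y \<in> T)"
    using assms(1) unfolding in_closure_of by (rule conjunct2)
  then have "\<exists>y. y \<in> S \<and> y \<in> T" using assms(2,3) by blast
  then show ?thesis using that by blast
qed

lemma fixed_zf:
  fixes x0 :: "'a::topological_space"
  shows "z_filter {Z\<in>zero_sets. x0 \<in> Z}"
proof (rule zfI)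
  show "{Z \<in> zero_sets. x0 \<in> Z} \<noteq> {}" using zero_sets_UNIV by blast
next
  fix F G assume "F \<in> {Z \<in> zero_sets. x0 \<in> Z}" "G \<in> {Z \<in> zero_sets. x0 \<in> Z}"
  then show "F \<inter> G \<in> {Z \<in> zero_sets. x0 \<in> Z}" using zero_sets_Int by blast
qed auto

lemma fixed_max:
  fixes x0 :: "'a::topological_space"
  assumes E: "z_filter \<E>" and sub: "{Z\<in>zero_sets. x0 \<in> Z} \<subseteq> \<E>"
  shows "\<E> = {Z\<in>zero_sets. x0 \<in> Z}"
proof
  show "\<E> \<subseteq> {Z\<in>zero_sets. x0 \<in> Z}"
  proof
    fix Z assume Z: "Z \<in> \<E>"
    then have zs: "Z \<in> zero_sets" using zf_sub[OF E] by blast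
    then obtain h :: "'a \<Rightarrow> real" where h: "continuous_on UNIV h" "Z = h -` {0}"
      unfolding zero_sets_def mem_Collect_eq by (elim exE conjE) simp
    have "x0 \<in> Z"
    proof (rule ccontr)
      assume n: "x0 \<notin> Z"
      define Z' where "Z' = {x. h x = h x0}"
      have "Z' \<in> zero_sets" unfolding Z'_def by (rule zero_sets_eq[OF h(1)])
      then have "Z' \<in> \<E>" using sub unfolding Z'_def by blast
      then have "Z \<inter> Z' \<in> \<E>" using zf_Int[OF E Z] by blast
      moreover have "Z \<inter> Z' = {}" using n h(2) unfolding Z'_def by auto
      ultimately show False using zf_empty[OF E] by simp
    qed
    then show "Z \<in> {Z\<in>zero_sets. x0 \<in> Z}" using zs by blast
  qed
qed (rule sub)

lemma fixed_closure:
  fixes x0 :: "'a::topological_space" and \<phi> :: "'a \<Rightarrow> complex"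
  assumes c: "continuous_on UNIV \<phi>" and xs: "x0 \<in> T"
  shows "(\<Inter>F\<in>{Z\<in>zero_sets. x0 \<in> Z}. ext_plane closure_of (Some ` \<phi> ` (F \<inter> T))) = {Some (\<phi> x0)}"
    (is "?S = _")
proof
  show "{Some (\<phi> x0)} \<subseteq> ?S"
  proof (clarify)
    fix F assume "F \<in> zero_sets" "x0 \<in> F"
    then have "Some (\<phi> x0) \<in> Some ` \<phi> ` (F \<inter> T)" using xs by blast
    then show "Some (\<phi> x0) \<in> ext_plane closure_of (Some ` \<phi> ` (F \<inter> T))"
      using closure_of_subset[of "Some ` \<phi> ` (F \<inter> T)" ext_plane] by auto
  qed
next
  show "?S \<subseteq> {Some (\<phi> x0)}"
  proof
    fix c assume cS: "c \<in> ?S"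
    have mem: "c \<in> ext_plane closure_of (Some ` \<phi> ` ({x. cmod (\<phi> x - \<phi> x0) \<le> r} \<inter> T))"
      if r0: "0 \<le> r" for r
    proof -
      have "{x. cmod (\<phi> x - \<phi> x0) \<le> r} \<in> zero_sets" by (rule zero_sets_le[OF cont_cmod_diff[OF c]])
      moreover have "x0 \<in> {x. cmod (\<phi> x - \<phi> x0) \<le> r}" using r0 by simp
      ultimately have "{x. cmod (\<phi> x - \<phi> x0) \<le> r} \<in> {Z\<in>zero_sets. x0 \<in> Z}" by blast
      then show ?thesis using cS by blast
    qed
    show "c \<in> {Some (\<phi> x0)}"
    proof (cases c)
      case None
      let ?B = "cball (\<phi> x0) 1"
      have op: "openin ext_plane (- (Some ` ?B))" by (rule openin_ext_compl) simp
      have "c \<in> - (Some ` ?B)" using None by auto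
      then obtain y where "y \<in> Some ` \<phi> ` ({x. cmod (\<phi> x - \<phi> x0) \<le> 1} \<inter> T)" "y \<in> - (Some ` ?B)"
        using closure_ofD[OF mem[of 1, OF zero_le_one] _ op] by blast
      then show ?thesis by (auto simp: dist_norm norm_minus_commute)
    next
      case (Some w)
      show ?thesis
      proof (rule ccontr)
        assume "c \<notin> {Some (\<phi> x0)}"
        then have ne: "w \<noteq> \<phi> x0" using Some by simp
        define \<rho> where "\<rho> = cmod (w - \<phi> x0) / 2"
        have \<rho>: "0 < \<rho>" using ne unfolding \<rho>_def by simp
        have op: "openin ext_plane (Some ` ball w \<rho>)" by (rule openin_ext_Some) simp
        have cin: "c \<in> Some ` ball w \<rho>" using Some \<rho> by simp
        obtain y where y1: "y \<in> Some ` \<phi> ` ({x. cmod (\<phi> x - \<phi> x0) \<le> \<rho>} \<inter> T)" and y2: "y \<in> Some ` ball w \<rho>"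
          using closure_ofD[OF mem[of \<rho>] cin op] \<rho> by auto
        then obtain x where x: "cmod (\<phi> x - \<phi> x0) \<le> \<rho>" "dist w (\<phi> x) < \<rho>" by auto
        have "cmod (w - \<phi> x0) \<le> cmod (w - \<phi> x) + cmod (\<phi> x - \<phi> x0)" by (rule norm_triangle_sub[of "w - \<phi> x0" "w - \<phi> x", simplified])
        also have "\<dots> < 2 * \<rho>" using x by (simp add: dist_norm)
        finally show False unfolding \<rho>_def by simp
      qed
    qed
  qed
qed



lemma wsup_real:
  assumes lt: "wsup v p F h < ennreal dr" and vnn: "\<forall>x. 0 \<le> v x" and pnn: "\<forall>y. 0 \<le> p y"
  obtains r where "0 \<le> r" "r < dr" "\<And>x. x \<in> F \<Longrightarrow> v x * p (h x) \<le> r"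
proof -
  define r where "r = enn2real (wsup v p F h)"
  have top: "wsup v p F h < top" using lt by (rule less_le_trans) simp
  then have e: "ennreal r = wsup v p F h" unfolding r_def by simp
  have r0: "0 \<le> r" unfolding r_def by simp
  have "ennreal r < ennreal dr" using e lt by simp
  then have rd: "r < dr" using r0 ennreal_less_iff by blast
  have b: "v x * p (h x) \<le> r" if "x \<in> F" for x
  proof -
    have "ennreal (v x * p (h x)) \<le> ennreal r" using wsup_upper[OF that, of v p h] e by simp
    then show ?thesis using r0 by simp
  qed
  show ?thesis using that r0 rd b by blast
qed

lemma seminorm_nonneg: "seminorm smul p \<Longrightarrow> 0 \<le> p y"
  unfolding seminorm_def by blast

lemma wdist_less_obtain:
  assumes "wdist v p F f W < d"
  obtains g where "g \<in> W" "wsup v p F (\<lambda>x. f x - g x) < d"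
  using assms unfolding wdist_def INF_less_iff by blast



lemma maximal_antisym:
  fixes smul :: "complex \<Rightarrow> 'b::ab_group_add \<Rightarrow> 'b" and \<phi> :: "'a::topological_space \<Rightarrow> complex"
    and dr :: real
  assumes vs: "vector_space smul" and sem: "seminorm smul p" and vnn: "\<forall>x. 0 \<le> v x"
    and \<phi>c: "continuous_on UNIV \<phi>" and \<phi>m: "multiplier smul \<phi> W"
    and bdd: "\<forall>g\<in>W. bdd_above ((\<lambda>x. v x * p (f x - g x)) ` UNIV)"
    and zf: "z_filter \<F>" and dF: "\<forall>F\<in>\<F>. ennreal dr \<le> wdist v p F f W" and d0: "0 < dr"
    and maxl: "\<And>Z. Z \<in> zero_sets \<Longrightarrow> (\<forall>F\<in>\<F>. F \<inter> Z \<noteq> {}) \<Longrightarrow>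
                 (\<forall>F\<in>\<F>. ennreal dr \<le> wdist v p (F \<inter> Z) f W) \<Longrightarrow> Z \<in> \<F>"
    and meet: "\<forall>F\<in>\<F>. F \<inter> supp v \<noteq> {}"
    and Sin: "(\<Inter>F\<in>\<F>. ext_plane closure_of (Some ` \<phi> ` (F \<inter> supp v)))
                \<subseteq> Some ` {z. Im z = 0 \<and> 0 \<le> Re z \<and> Re z \<le> 1}"
  shows "\<exists>c. (\<Inter>F\<in>\<F>. ext_plane closure_of (Some ` \<phi> ` (F \<inter> supp v))) = {c}"
proof -
  define I where "I = {z. Im z = 0 \<and> 0 \<le> Re z \<and> Re z \<le> 1}"
  define G where "G F = Some ` \<phi> ` (F \<inter> supp v)" for F
  define S where "S = (\<Inter>F\<in>\<F>. ext_plane closure_of (G F))"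
  have SI: "S \<subseteq> Some ` I" using Sin unfolding S_def G_def I_def .
  have Gmono: "\<And>F F'. F \<subseteq> F' \<Longrightarrow> G F \<subseteq> G F'" unfolding G_def by blast
  have Gcl: "G F \<subseteq> ext_plane closure_of (G F)" for F by (rule closure_of_subset) simp
  have pnn: "\<forall>y. 0 \<le> p y" using seminorm_nonneg[OF sem] by blast
  have Sne: "S \<noteq> {}"
  proof -
    have cU: "closedin ext_plane UNIV" using closedin_topspace[of ext_plane] by simp
    have "(\<Inter>F\<in>\<F>. ext_plane closure_of (G F)) \<inter> UNIV \<noteq> {}"
    proof (rule ext_fip[OF zf Gmono cU])
      fix F assume "F \<in> \<F>"
      then have "G F \<noteq> {}" using meet unfolding G_def by blast
      then show "ext_plane closure_of (G F) \<inter> UNIV \<noteq> {}" using Gcl[of F] by blast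
    qed
    then show ?thesis unfolding S_def by simp
  qed
  have away: False if w: "Some w \<in> S" and T: "open T" "w \<in> T" and Z: "Z \<in> \<F>" and ZT: "\<forall>x\<in>Z. \<phi> x \<notin> T" for w T Z
  proof -
    have "Some w \<in> ext_plane closure_of (G Z)" using w Z unfolding S_def by blast
    moreover have "Some w \<in> Some ` T" using T by simp
    ultimately obtain y where "y \<in> G Z" "y \<in> Some ` T"
      using closure_ofD openin_ext_Some[OF T(1)] by metis
    then show False using ZT unfolding G_def by auto
  qed
  show ?thesis unfolding G_def[symmetric] S_def[symmetric]
  proof (rule ccontr)
    assume nsing: "\<nexists>c. S = {c}"
    obtain c1 where c1: "c1 \<in> S" using Sne by blast
    obtain c2 where c2: "c2 \<in> S" "c2 \<noteq> c1" using nsing c1 by blast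
    obtain z1 where z1: "z1 \<in> I" "c1 = Some z1" using c1 SI by blast
    obtain z2 where z2: "z2 \<in> I" "c2 = Some z2" using c2 SI by blast
    have "Re z1 \<noteq> Re z2"
    proof
      assume "Re z1 = Re z2"
      moreover have "Im z1 = Im z2" using z1 z2 unfolding I_def by simp
      ultimately have "z1 = z2" by (rule complex_eqI)
      then show False using z1 z2 c2 by simp
    qed
    then obtain za zb where za: "za \<in> I" "Some za \<in> S" and zb: "zb \<in> I" "Some zb \<in> S"
      and ab: "Re za < Re zb"
    proof (cases "Re z1 < Re z2")
      case True then show ?thesis using that[of z1 z2] z1 z2 c1 c2 by simp
    next
      case False then show ?thesis using that[of z2 z1] z1 z2 c1 c2 \<open>Re z1 \<noteq> Re z2\<close> by simp
    qed
    define a where "a = Re za"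
    define b where "b = Re zb"
    have a0: "0 \<le> a" and b1: "b \<le> 1" and ab': "a < b" using za zb ab unfolding a_def b_def I_def by auto
    define \<alpha> where "\<alpha> = a + (b - a) / 3"
    define \<beta> where "\<beta> = b - (b - a) / 3"
    have \<alpha>\<beta>: "a < \<alpha>" "\<alpha> < \<beta>" "\<beta> < b" "0 \<le> \<alpha>" "\<beta> \<le> 1"
      using a0 b1 ab' unfolding \<alpha>_def \<beta>_def by (auto simp: field_simps)
    have cRe: "continuous_on UNIV (\<lambda>x. Re (\<phi> x))" using \<phi>c by (intro continuous_intros) auto
    have cRe2: "continuous_on UNIV (\<lambda>x. - Re (\<phi> x))" using \<phi>c by (intro continuous_intros) auto
    define A1 where "A1 = {x. Re (\<phi> x) \<le> \<beta>}"
    define A2 where "A2 = {x. \<alpha> \<le> Re (\<phi> x)}"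
    have A1z: "A1 \<in> zero_sets" unfolding A1_def by (rule zero_sets_le[OF cRe])
    have A2z: "A2 \<in> zero_sets"
    proof -
      have "A2 = {x. - Re (\<phi> x) \<le> - \<alpha>}" unfolding A2_def by auto
      moreover have "{x. - Re (\<phi> x) \<le> - \<alpha>} \<in> zero_sets" by (rule zero_sets_le[OF cRe2])
      ultimately show ?thesis by (simp only:)
    qed
    have A1n: "A1 \<notin> \<F>"
    proof
      assume "A1 \<in> \<F>"
      show False
      proof (rule away[OF zb(2) _ _ \<open>A1 \<in> \<F>\<close>])
        show "open {z. \<beta> < Re z}" by (rule open_halfspace_Re_gt)
        show "zb \<in> {z. \<beta> < Re z}" using \<alpha>\<beta> unfolding b_def by simp
        show "\<forall>x\<in>A1. \<phi> x \<notin> {z. \<beta> < Re z}" unfolding A1_def by auto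
      qed
    qed
    have A2n: "A2 \<notin> \<F>"
    proof
      assume "A2 \<in> \<F>"
      show False
      proof (rule away[OF za(2) _ _ \<open>A2 \<in> \<F>\<close>])
        show "open {z. Re z < \<alpha>}" by (rule open_halfspace_Re_lt)
        show "za \<in> {z. Re z < \<alpha>}" using \<alpha>\<beta> unfolding a_def by simp
        show "\<forall>x\<in>A2. \<phi> x \<notin> {z. Re z < \<alpha>}" unfolding A2_def by auto
      qed
    qed
    have meet1: "\<forall>F\<in>\<F>. F \<inter> A1 \<noteq> {}"
    proof (intro ballI notI)
      fix F assume F: "F \<in> \<F>" and e: "F \<inter> A1 = {}"
      have "F \<subseteq> A2"
      proof
        fix x assume "x \<in> F"
        then have "x \<notin> A1" using e by blast
        then show "x \<in> A2" using \<alpha>\<beta> unfolding A1_def A2_def by auto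
      qed
      then show False using zf_up[OF zf F A2z] A2n by blast
    qed
    have meet2: "\<forall>F\<in>\<F>. F \<inter> A2 \<noteq> {}"
    proof (intro ballI notI)
      fix F assume F: "F \<in> \<F>" and e: "F \<inter> A2 = {}"
      have "F \<subseteq> A1"
      proof
        fix x assume "x \<in> F"
        then have "x \<notin> A2" using e by blast
        then show "x \<in> A1" using \<alpha>\<beta> unfolding A1_def A2_def by auto
      qed
      then show False using zf_up[OF zf F A1z] A1n by blast
    qed
    have "\<not> (\<forall>F\<in>\<F>. ennreal dr \<le> wdist v p (F \<inter> A1) f W)" using maxl[OF A1z meet1] A1n by blast
    then obtain F1 where F1a: "F1 \<in> \<F>" "\<not> ennreal dr \<le> wdist v p (F1 \<inter> A1) f W" by blast
    then have F1: "F1 \<in> \<F>" "wdist v p (F1 \<inter> A1) f W < ennreal dr" by (simp_all add: not_le)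
    have "\<not> (\<forall>F\<in>\<F>. ennreal dr \<le> wdist v p (F \<inter> A2) f W)" using maxl[OF A2z meet2] A2n by blast
    then obtain F2 where F2a: "F2 \<in> \<F>" "\<not> ennreal dr \<le> wdist v p (F2 \<inter> A2) f W" by blast
    then have F2: "F2 \<in> \<F>" "wdist v p (F2 \<inter> A2) f W < ennreal dr" by (simp_all add: not_le)
    obtain g1 where g1: "g1 \<in> W" "wsup v p (F1 \<inter> A1) (\<lambda>x. f x - g1 x) < ennreal dr"
      using wdist_less_obtain[OF F1(2)] by blast
    obtain g2 where g2: "g2 \<in> W" "wsup v p (F2 \<inter> A2) (\<lambda>x. f x - g2 x) < ennreal dr"
      using wdist_less_obtain[OF F2(2)] by blast
    obtain r1 where r1: "0 \<le> r1" "r1 < dr" "\<And>x. x \<in> F1 \<inter> A1 \<Longrightarrow> v x * p (f x - g1 x) \<le> r1"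
      using wsup_real[OF g1(2) vnn pnn] by blast
    obtain r2 where r2: "0 \<le> r2" "r2 < dr" "\<And>x. x \<in> F2 \<inter> A2 \<Longrightarrow> v x * p (f x - g2 x) \<le> r2"
      using wsup_real[OF g2(2) vnn pnn] by blast
    obtain M1 where M1: "\<And>x. v x * p (f x - g1 x) \<le> M1"
      using bdd g1(1) unfolding bdd_above_def by blast
    obtain M2 where M2: "\<And>x. v x * p (f x - g2 x) \<le> M2"
      using bdd g2(1) unfolding bdd_above_def by blast
    define r where "r = max r1 r2"
    define M where "M = max (max M1 M2) 0"
    have r: "0 \<le> r" "r < dr" "r1 \<le> r" "r2 \<le> r" using r1 r2 unfolding r_def by auto
    have M: "0 \<le> M" "M1 \<le> M" "M2 \<le> M" unfolding M_def by auto
    define \<eta> where "\<eta> = (dr - r) / (2 * (r + M + 1))"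
    have pos: "0 < r + M + 1" using r M by linarith
    have \<eta>0: "0 < \<eta>" unfolding \<eta>_def using r pos by simp
    define R where "R = (1 + \<eta>) * r + \<eta> * M"
    have R0: "0 \<le> R" unfolding R_def using r M \<eta>0 by simp
    have Rd: "R < dr"
    proof -
      have "\<eta> * (r + M + 1) = (dr - r) / 2" unfolding \<eta>_def using pos by (simp add: field_simps)
      moreover have "R = r + \<eta> * (r + M + 1) - \<eta>" unfolding R_def by (simp add: algebra_simps)
      ultimately have "R = r + (dr - r) / 2 - \<eta>" by simp
      then show ?thesis using r \<eta>0 by argo
    qed
    obtain n m :: nat and \<epsilon> :: real where \<epsilon>: "0 < \<epsilon>"
      and Q1: "\<And>z t. 0 \<le> t \<Longrightarrow> t \<le> 1 \<Longrightarrow> cmod (z - of_real t) < \<epsilon> \<Longrightarrow>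
          cmod ((1 - z^n)^m) + cmod (1 - (1 - z^n)^m) \<le> 1 + \<eta>"
      and Q2: "\<And>z t. 0 \<le> t \<Longrightarrow> t \<le> 1 \<Longrightarrow> cmod (z - of_real t) < \<epsilon> \<Longrightarrow> Re z \<le> \<alpha> \<Longrightarrow>
          cmod (1 - (1 - z^n)^m) \<le> \<eta>"
      and Q3: "\<And>z t. 0 \<le> t \<Longrightarrow> t \<le> 1 \<Longrightarrow> cmod (z - of_real t) < \<epsilon> \<Longrightarrow> \<beta> \<le> Re z \<Longrightarrow>
          cmod ((1 - z^n)^m) \<le> \<eta>"
      by (rule poly_complex[OF \<alpha>\<beta>(4) \<alpha>\<beta>(2) \<alpha>\<beta>(5) \<eta>0]) (rule that; assumption)
    define N where "N = {z. \<exists>t. 0 \<le> t \<and> t \<le> 1 \<and> cmod (z - of_real t) < \<epsilon>}"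
    have Nopen: "open N"
    proof -
      have "N = (\<Union>t\<in>{0..1::real}. ball (complex_of_real t) \<epsilon>)"
        unfolding N_def by (auto simp: dist_norm norm_minus_commute)
      then show ?thesis by auto
    qed
    define K where "K = - (Some ` N)"
    have Kc: "closedin ext_plane K"
    proof -
      have "topspace ext_plane - K = Some ` N" unfolding K_def by simp
      then show ?thesis unfolding closedin_def using openin_ext_Some[OF Nopen] by simp
    qed
    have IN: "I \<subseteq> N"
    proof
      fix z assume "z \<in> I"
      then have "z = complex_of_real (Re z)" "0 \<le> Re z" "Re z \<le> 1" unfolding I_def by (auto simp: complex_eq_iff)
      then show "z \<in> N" unfolding N_def using \<epsilon> by (intro CollectI exI[of _ "Re z"]) auto
    qed
    have "\<exists>F0\<in>\<F>. ext_plane closure_of (G F0) \<inter> K = {}"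
    proof (rule ccontr)
      assume na: "\<not> (\<exists>F0\<in>\<F>. ext_plane closure_of (G F0) \<inter> K = {})"
      have "S \<inter> K \<noteq> {}" unfolding S_def
      proof (rule ext_fip[OF zf Gmono Kc])
        fix F assume "F \<in> \<F>" then show "ext_plane closure_of (G F) \<inter> K \<noteq> {}" using na by simp
      qed
      moreover have "S \<inter> K = {}" using SI IN unfolding K_def by blast
      ultimately show False by simp
    qed
    then obtain F0 where F0: "F0 \<in> \<F>" "ext_plane closure_of (G F0) \<inter> K = {}" by blast
    have \<phi>N: "\<phi> x \<in> N" if "x \<in> F0" "x \<in> supp v" for x
    proof -
      have "Some (\<phi> x) \<in> G F0" using that unfolding G_def by blast
      then have "Some (\<phi> x) \<notin> K" using Gcl[of F0] F0(2) by blast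
      then show ?thesis unfolding K_def by blast
    qed
    define F where "F = F0 \<inter> F1 \<inter> F2"
    have FF: "F \<in> \<F>" unfolding F_def by (intro zf_Int[OF zf] F0(1) F1(1) F2(1))
    define \<psi> where "\<psi> x = (1 - \<phi> x ^ n) ^ m" for x
    have \<psi>m: "multiplier smul \<psi> W" unfolding \<psi>_def by (rule multiplier_Q[OF vs \<phi>m])
    define g where "g x = smul (\<psi> x) (g1 x) + smul (1 - \<psi> x) (g2 x)" for x
    have gW: "g \<in> W"
    proof -
      have "\<forall>f\<in>W. \<forall>g\<in>W. (\<lambda>x. smul (\<psi> x) (f x) + smul (1 - \<psi> x) (g x)) \<in> W"
        using \<psi>m unfolding multiplier_def .
      from bspec[OF bspec[OF this g1(1)] g2(1)] show ?thesis unfolding g_def[abs_def] .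
    qed
    have bound: "v x * p (f x - g x) \<le> R" if xF: "x \<in> F" for x
    proof -
      define P1 where "P1 = v x * p (f x - g1 x)"
      define P2 where "P2 = v x * p (f x - g2 x)"
      have P0: "0 \<le> P1" "0 \<le> P2" unfolding P1_def P2_def using vnn pnn by auto
      have PM: "P1 \<le> M" "P2 \<le> M" unfolding P1_def P2_def using M1[of x] M2[of x] M by auto
      have e: "f x - g x = smul (\<psi> x) (f x - g1 x) + smul (1 - \<psi> x) (f x - g2 x)"
        unfolding g_def by (rule decomp[OF vs])
      have pb: "p (f x - g x) \<le> cmod (\<psi> x) * p (f x - g1 x) + cmod (1 - \<psi> x) * p (f x - g2 x)"
        unfolding e by (rule seminorm_comb[OF vs sem])
      have vb: "v x * p (f x - g x) \<le> cmod (\<psi> x) * P1 + cmod (1 - \<psi> x) * P2"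
      proof -
        have "v x * p (f x - g x) \<le> v x * (cmod (\<psi> x) * p (f x - g1 x) + cmod (1 - \<psi> x) * p (f x - g2 x))"
          using pb vnn by (simp add: mult_left_mono)
        also have "\<dots> = cmod (\<psi> x) * P1 + cmod (1 - \<psi> x) * P2"
          unfolding P1_def P2_def by (simp add: algebra_simps)
        finally show ?thesis .
      qed
      show ?thesis
      proof (cases "v x = 0")
        case True
        have "v x * p (f x - g x) = 0" unfolding True by (rule mult_zero_left)
        then show ?thesis using R0 by linarith
      next
        case False
        then have "x \<in> {x. v x \<noteq> 0}" by simp
        then have xs: "x \<in> supp v" unfolding supp_def by (rule subsetD[OF closure_subset])
        have xF0: "x \<in> F0" and xF1: "x \<in> F1" and xF2: "x \<in> F2" using xF unfolding F_def by auto
        obtain t where t: "0 \<le> t" "t \<le> 1" "cmod (\<phi> x - of_real t) < \<epsilon>"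
          using \<phi>N[OF xF0 xs] unfolding N_def by blast
        have sum: "cmod (\<psi> x) + cmod (1 - \<psi> x) \<le> 1 + \<eta>" unfolding \<psi>_def by (rule Q1[OF t])
        have n1: "0 \<le> cmod (\<psi> x)" and n2: "0 \<le> cmod (1 - \<psi> x)" by simp_all
        have b1: "cmod (\<psi> x) \<le> 1 + \<eta>" using sum n2 by linarith
        have b2: "cmod (1 - \<psi> x) \<le> 1 + \<eta>" using sum n1 by linarith
        have \<eta>M: "0 \<le> \<eta> * M" using \<eta>0 M by simp
        consider (lo) "Re (\<phi> x) < \<alpha>" | (hi) "\<beta> < Re (\<phi> x)" | (mid) "\<alpha> \<le> Re (\<phi> x)" "Re (\<phi> x) \<le> \<beta>"
          by linarith
        then show ?thesis
        proof cases
          case lo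
          have xA1: "x \<in> A1" unfolding A1_def using lo \<alpha>\<beta> by simp
          have P1r: "P1 \<le> r" using r1(3)[of x] xA1 xF1 r unfolding P1_def by auto
          have c2: "cmod (1 - \<psi> x) \<le> \<eta>" unfolding \<psi>_def using Q2[OF t] lo by simp
          have "cmod (\<psi> x) * P1 \<le> (1 + \<eta>) * r" using b1 P1r P0 \<eta>0 by (intro mult_mono) auto
          moreover have "cmod (1 - \<psi> x) * P2 \<le> \<eta> * M" using c2 PM P0 \<eta>0 by (intro mult_mono) auto
          ultimately show ?thesis using vb unfolding R_def by linarith
        next
          case hi
          have xA2: "x \<in> A2" unfolding A2_def using hi \<alpha>\<beta> by simp
          have P2r: "P2 \<le> r" using r2(3)[of x] xA2 xF2 r unfolding P2_def by auto
          have c1: "cmod (\<psi> x) \<le> \<eta>" unfolding \<psi>_def using Q3[OF t] hi by simp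
          have "cmod (\<psi> x) * P1 \<le> \<eta> * M" using c1 PM P0 \<eta>0 by (intro mult_mono) auto
          moreover have "cmod (1 - \<psi> x) * P2 \<le> (1 + \<eta>) * r" using b2 P2r P0 \<eta>0 by (intro mult_mono) auto
          ultimately show ?thesis using vb unfolding R_def by linarith
        next
          case mid
          have xA1: "x \<in> A1" unfolding A1_def using mid by simp
          have xA2: "x \<in> A2" unfolding A2_def using mid by simp
          have P1r: "P1 \<le> r" using r1(3)[of x] xA1 xF1 r unfolding P1_def by auto
          have P2r: "P2 \<le> r" using r2(3)[of x] xA2 xF2 r unfolding P2_def by auto
          have "cmod (\<psi> x) * P1 \<le> cmod (\<psi> x) * r" using P1r by (simp add: mult_left_mono)
          moreover have "cmod (1 - \<psi> x) * P2 \<le> cmod (1 - \<psi> x) * r" using P2r by (simp add: mult_left_mono)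
          moreover have "cmod (\<psi> x) * r + cmod (1 - \<psi> x) * r \<le> (1 + \<eta>) * r"
          proof -
            have "cmod (\<psi> x) * r + cmod (1 - \<psi> x) * r = (cmod (\<psi> x) + cmod (1 - \<psi> x)) * r"
              by (simp add: algebra_simps)
            also have "\<dots> \<le> (1 + \<eta>) * r" using sum r by (simp add: mult_right_mono)
            finally show ?thesis .
          qed
          ultimately show ?thesis using vb \<eta>M unfolding R_def by linarith
        qed
      qed
    qed
    have "wsup v p F (\<lambda>x. f x - g x) \<le> ennreal R" by (rule wsup_le) (rule bound)
    also have "\<dots> < ennreal dr" using Rd R0 ennreal_less_iff by blast
    also have "ennreal dr \<le> wdist v p F f W" using dF FF by blast
    also have "\<dots> \<le> wsup v p F (\<lambda>x. f x - g x)" by (rule wdist_le[OF gW])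
    finally show False by simp
  qed
qed



theorem theorem2p7:
  fixes V :: "('a::topological_space \<Rightarrow> real) set"
    and smul :: "complex \<Rightarrow> 'b::ab_group_add \<Rightarrow> 'b"
    and \<A> :: "('b \<Rightarrow> real) set"
    and A :: "('a \<Rightarrow> complex) set"
    and W :: "('a \<Rightarrow> 'b) set"
    and f :: "'a \<Rightarrow> 'b"
  assumes X_vs: "vector_space smul"
    and seminorms: "\<forall>p\<in>\<A>. seminorm smul p"
    and V_nonneg: "\<forall>v\<in>V. \<forall>x. 0 \<le> v x"
    and A_cont: "\<forall>\<phi>\<in>A. continuous_on UNIV \<phi>"
    and A_mult: "\<forall>\<phi>\<in>A. multiplier smul \<phi> W"
    and f_bdd: "\<forall>g\<in>W. (\<lambda>x. f x - g x) \<in> FVb V \<A>"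
  shows "\<forall>p\<in>\<A>. \<forall>v\<in>V. (\<exists>x. v x \<noteq> 0) \<longrightarrow>
           (\<exists>\<F>. antisymmetric_zf A v \<F> \<and>
              (INF F\<in>\<F>. wdist v p F f W) = wdist v p UNIV f W \<and>
              (\<forall>\<E>. z_filter \<E> \<and> \<F> \<subseteq> \<E> \<and> (INF E\<in>\<E>. wdist v p E f W) = wdist v p UNIV f W
                    \<longrightarrow> \<E> = \<F>))"
proof (intro ballI impI)
  fix p v assume p: "p \<in> \<A>" and v: "v \<in> V" and ex: "\<exists>x. v x \<noteq> 0"
  obtain x0 where x0: "v x0 \<noteq> 0" using ex by blast
  have sem: "seminorm smul p" using seminorms p by blast
  have vnn: "\<forall>x. 0 \<le> v x" using V_nonneg v by blast
  have pnn: "\<forall>y. 0 \<le> p y" using seminorm_nonneg[OF sem] by blast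
  define d where "d = wdist v p UNIV f W"
  have bdd: "\<forall>g\<in>W. bdd_above ((\<lambda>x. v x * p (f x - g x)) ` UNIV)"
  proof
    fix g assume g: "g \<in> W"
    have "(\<lambda>x. f x - g x) \<in> FVb V \<A>" using f_bdd g by blast
    then have "\<forall>v\<in>V. \<forall>p\<in>\<A>. bdd_above ((\<lambda>x. v x * p (f x - g x)) ` UNIV)"
      unfolding FVb_def by simp
    from bspec[OF bspec[OF this v] p] show "bdd_above ((\<lambda>x. v x * p (f x - g x)) ` UNIV)" .
  qed
  have INFle: "(INF E\<in>\<E>. wdist v p E f W) \<le> d" if "z_filter \<E>" for \<E>
    unfolding d_def by (rule INF_lower[OF zfilter_UNIV[OF that]])
  have INFeq: "(INF E\<in>\<E>. wdist v p E f W) = d \<longleftrightarrow> (\<forall>E\<in>\<E>. d \<le> wdist v p E f W)"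
    if zE: "z_filter \<E>" for \<E>
  proof
    assume "(INF E\<in>\<E>. wdist v p E f W) = d"
    then show "\<forall>E\<in>\<E>. d \<le> wdist v p E f W" by (metis INF_lower)
  next
    assume "\<forall>E\<in>\<E>. d \<le> wdist v p E f W"
    then have "d \<le> (INF E\<in>\<E>. wdist v p E f W)" by (intro INF_greatest) blast
    then show "(INF E\<in>\<E>. wdist v p E f W) = d" using INFle[OF zE] by (rule antisym[rotated])
  qed
  have xsupp: "x0 \<in> supp v"
  proof -
    have "x0 \<in> {x. v x \<noteq> 0}" using x0 by simp
    then show ?thesis unfolding supp_def by (rule subsetD[OF closure_subset])
  qed
  show "\<exists>\<F>. antisymmetric_zf A v \<F> \<and>
              (INF F\<in>\<F>. wdist v p F f W) = wdist v p UNIV f W \<and>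
              (\<forall>\<E>. z_filter \<E> \<and> \<F> \<subseteq> \<E> \<and> (INF E\<in>\<E>. wdist v p E f W) = wdist v p UNIV f W
                    \<longrightarrow> \<E> = \<F>)"
  proof (cases "W = {} \<or> d = 0")
    case True
    define F0 where "F0 = {Z\<in>zero_sets. x0 \<in> Z}"
    have zf: "z_filter F0" unfolding F0_def by (rule fixed_zf)
    have anti: "antisymmetric_zf A v F0"
      unfolding antisymmetric_zf_def Let_def
    proof (intro conjI ballI impI)
      show "z_filter F0" by (rule zf)
    next
      fix F assume "F \<in> F0" then show "F \<inter> supp v \<noteq> {}" using xsupp unfolding F0_def by blast
    next
      fix \<phi> assume "\<phi> \<in> A"
      then have c: "continuous_on UNIV \<phi>" using A_cont by blast
      show "\<exists>c. (\<Inter>F\<in>F0. ext_plane closure_of (Some ` \<phi> ` (F \<inter> supp v))) = {c}"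
        unfolding F0_def using fixed_closure[OF c xsupp] by blast
    qed
    have "\<forall>E\<in>F0. d \<le> wdist v p E f W"
    proof
      fix E assume "E \<in> F0"
      show "d \<le> wdist v p E f W"
      proof (cases "W = {}")
        case True then show ?thesis unfolding wdist_def by simp
      next
        case False then have "d = 0" using \<open>W = {} \<or> d = 0\<close> by blast
        then show ?thesis by simp
      qed
    qed
    then have inf: "(INF F\<in>F0. wdist v p F f W) = d" using INFeq[OF zf] by blast
    have mx: "\<forall>\<E>. z_filter \<E> \<and> F0 \<subseteq> \<E> \<and> (INF E\<in>\<E>. wdist v p E f W) = d \<longrightarrow> \<E> = F0"
      unfolding F0_def using fixed_max by blast
    from anti inf mx show ?thesis unfolding d_def by blast
  next
    case False
    then have Wne: "W \<noteq> {}" and dne: "d \<noteq> 0" by auto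
    obtain g0 where g0: "g0 \<in> W" using Wne by blast
    obtain M where M: "\<And>x. v x * p (f x - g0 x) \<le> M"
      using bdd g0 unfolding bdd_above_def by blast
    have "d \<le> wsup v p UNIV (\<lambda>x. f x - g0 x)" unfolding d_def by (rule wdist_le[OF g0])
    also have "\<dots> \<le> ennreal M" by (rule wsup_le) (rule M)
    also have "\<dots> < top" by simp
    finally have dtop: "d < top" .
    define dr where "dr = enn2real d"
    have dd: "d = ennreal dr" unfolding dr_def using dtop by simp
    have dr0: "0 < dr"
    proof -
      have "0 \<le> dr" unfolding dr_def by simp
      moreover have "dr \<noteq> 0" using dne dd by auto
      ultimately show ?thesis by simp
    qed
    define \<ZZ> where "\<ZZ> = {\<E>. z_filter \<E> \<and> (\<forall>E\<in>\<E>. d \<le> wdist v p E f W)}"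
    have U: "{UNIV} \<in> \<ZZ>"
    proof -
      have "z_filter {UNIV::'a set}"
      proof (rule zfI)
        show "{UNIV} \<subseteq> zero_sets" using zero_sets_UNIV by blast
      next
        fix Z Z' :: "'a set" assume "Z \<in> {UNIV}" "Z' \<in> zero_sets" "Z \<subseteq> Z'"
        then show "Z' \<in> {UNIV}" by auto
      qed auto
      moreover have "\<forall>E\<in>{UNIV}. d \<le> wdist v p E f W" unfolding d_def by simp
      ultimately show ?thesis unfolding \<ZZ>_def by blast
    qed
    have "\<exists>M\<in>\<ZZ>. \<forall>X\<in>\<ZZ>. M \<subseteq> X \<longrightarrow> X = M"
    proof (rule subset_Zorn_nonempty)
      show "\<ZZ> \<noteq> {}" using U by blast
    next
      fix \<C> assume Cne: "\<C> \<noteq> {}" and ch: "subset.chain \<ZZ> \<C>"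
      have Csub: "\<C> \<subseteq> \<ZZ>" and tot: "\<forall>X\<in>\<C>. \<forall>Y\<in>\<C>. X \<subseteq> Y \<or> Y \<subseteq> X"
        using ch unfolding subset_chain_def by blast+
      have zC: "z_filter \<E>" if "\<E> \<in> \<C>" for \<E> using Csub that unfolding \<ZZ>_def by blast
      have dC: "\<forall>E\<in>\<E>. d \<le> wdist v p E f W" if "\<E> \<in> \<C>" for \<E> using Csub that unfolding \<ZZ>_def by blast
      have "z_filter (\<Union>\<C>)"
      proof (rule zfI)
        show "\<Union>\<C> \<subseteq> zero_sets" using zf_sub[OF zC] by blast
      next
        obtain \<E> where "\<E> \<in> \<C>" using Cne by blast
        then show "\<Union>\<C> \<noteq> {}" using zf_ne[OF zC] by blast
      next
        show "{} \<notin> \<Union>\<C>" using zf_empty[OF zC] by blast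
      next
        fix F G assume "F \<in> \<Union>\<C>" "G \<in> \<Union>\<C>"
        then obtain E1 E2 where E: "E1 \<in> \<C>" "F \<in> E1" "E2 \<in> \<C>" "G \<in> E2" by blast
        show "F \<inter> G \<in> \<Union>\<C>"
        proof (cases "E1 \<subseteq> E2")
          case True
          then have "F \<inter> G \<in> E2" using zf_Int[OF zC[OF E(3)]] E by blast
          then show ?thesis using E(3) by blast
        next
          case False
          then have "E2 \<subseteq> E1" using tot E by blast
          then have "F \<inter> G \<in> E1" using zf_Int[OF zC[OF E(1)]] E by blast
          then show ?thesis using E(1) by blast
        qed
      next
        fix Z Z' assume "Z \<in> \<Union>\<C>" and Z': "Z' \<in> zero_sets" "Z \<subseteq> Z'"
        then obtain E where E: "E \<in> \<C>" "Z \<in> E" by blast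
        then have "Z' \<in> E" using zf_up[OF zC[OF E(1)] E(2) Z'] by blast
        then show "Z' \<in> \<Union>\<C>" using E(1) by blast
      qed
      moreover have "\<forall>E\<in>\<Union>\<C>. d \<le> wdist v p E f W" using dC by blast
      ultimately show "\<Union>\<C> \<in> \<ZZ>" unfolding \<ZZ>_def by blast
    qed
    then obtain F0 where F0Z: "F0 \<in> \<ZZ>" and F0max: "\<forall>X\<in>\<ZZ>. F0 \<subseteq> X \<longrightarrow> X = F0" by blast
    have zf: "z_filter F0" and dF: "\<forall>F\<in>F0. d \<le> wdist v p F f W" using F0Z unfolding \<ZZ>_def by blast+
    have dF': "\<forall>F\<in>F0. ennreal dr \<le> wdist v p F f W" using dF dd by simp
    have meet: "\<forall>F\<in>F0. F \<inter> supp v \<noteq> {}"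
    proof (intro ballI notI)
      fix F assume F: "F \<in> F0" and e: "F \<inter> supp v = {}"
      have "v x * p (f x - g0 x) \<le> 0" if "x \<in> F" for x
      proof -
        have "x \<notin> supp v" using that e by blast
        then have "x \<notin> {x. v x \<noteq> 0}" unfolding supp_def using closure_subset[of "{x. v x \<noteq> 0}"] by blast
        then have "v x = 0" by simp
        then show ?thesis by simp
      qed
      then have "wsup v p F (\<lambda>x. f x - g0 x) \<le> ennreal 0" by (rule wsup_le)
      moreover have "d \<le> wdist v p F f W" using dF F by blast
      moreover have "wdist v p F f W \<le> wsup v p F (\<lambda>x. f x - g0 x)" by (rule wdist_le[OF g0])
      ultimately have "d \<le> 0" by simp
      then show False using dne by simp
    qed
    have maxl: "Z \<in> F0" if Zz: "Z \<in> zero_sets" and Zm: "\<forall>F\<in>F0. F \<inter> Z \<noteq> {}"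
      and Zd: "\<forall>F\<in>F0. ennreal dr \<le> wdist v p (F \<inter> Z) f W" for Z
    proof -
      define E where "E = {Z'\<in>zero_sets. \<exists>F\<in>F0. F \<inter> Z \<subseteq> Z'}"
      have zE: "z_filter E"
      proof (rule zfI)
        show "E \<subseteq> zero_sets" unfolding E_def by blast
      next
        have "UNIV \<in> F0" by (rule zfilter_UNIV[OF zf])
        then show "E \<noteq> {}" unfolding E_def using zero_sets_UNIV by blast
      next
        show "{} \<notin> E" unfolding E_def using Zm by blast
      next
        fix F G assume "F \<in> E" "G \<in> E"
        then obtain F1 G1 where FG: "F \<in> zero_sets" "G \<in> zero_sets" "F1 \<in> F0" "G1 \<in> F0" "F1 \<inter> Z \<subseteq> F" "G1 \<inter> Z \<subseteq> G"
          unfolding E_def by blast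
        have "F1 \<inter> G1 \<in> F0" using zf_Int[OF zf FG(3,4)] .
        moreover have "(F1 \<inter> G1) \<inter> Z \<subseteq> F \<inter> G" using FG by blast
        moreover have "F \<inter> G \<in> zero_sets" using zero_sets_Int[OF FG(1,2)] .
        ultimately show "F \<inter> G \<in> E" unfolding E_def by blast
      next
        fix Y Y' assume "Y \<in> E" "Y' \<in> zero_sets" "Y \<subseteq> Y'"
        then show "Y' \<in> E" unfolding E_def by blast
      qed
      have dE: "\<forall>Y\<in>E. d \<le> wdist v p Y f W"
      proof
        fix Y assume "Y \<in> E"
        then obtain F where F: "F \<in> F0" "F \<inter> Z \<subseteq> Y" unfolding E_def by blast
        have "d \<le> wdist v p (F \<inter> Z) f W" using Zd F dd by simp
        also have "\<dots> \<le> wdist v p Y f W" by (rule wdist_mono[OF F(2)])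
        finally show "d \<le> wdist v p Y f W" .
      qed
      have "E \<in> \<ZZ>" unfolding \<ZZ>_def using zE dE by blast
      moreover have "F0 \<subseteq> E" unfolding E_def using zf_sub[OF zf] by blast
      ultimately have "E = F0" using F0max by blast
      moreover have "Z \<in> E"
      proof -
        have "UNIV \<in> F0" by (rule zfilter_UNIV[OF zf])
        then show ?thesis unfolding E_def using Zz by blast
      qed
      ultimately show ?thesis by simp
    qed
    have anti: "antisymmetric_zf A v F0"
      unfolding antisymmetric_zf_def Let_def
    proof (intro conjI ballI impI)
      show "z_filter F0" by (rule zf)
    next
      fix F assume "F \<in> F0" then show "F \<inter> supp v \<noteq> {}" using meet by blast
    next
      fix \<phi> assume "\<phi> \<in> A"
        and Sin: "(\<Inter>F\<in>F0. ext_plane closure_of (Some ` \<phi> ` (F \<inter> supp v)))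
                \<subseteq> Some ` {z. Im z = 0 \<and> 0 \<le> Re z \<and> Re z \<le> 1}"
      then have c: "continuous_on UNIV \<phi>" and m: "multiplier smul \<phi> W" using A_cont A_mult by blast+
      show "\<exists>c. (\<Inter>F\<in>F0. ext_plane closure_of (Some ` \<phi> ` (F \<inter> supp v))) = {c}"
        by (rule maximal_antisym[OF X_vs sem vnn c m bdd zf dF' dr0 maxl meet Sin])
    qed
    have inf: "(INF F\<in>F0. wdist v p F f W) = d" using INFeq[OF zf] dF by blast
    have mx: "\<forall>\<E>. z_filter \<E> \<and> F0 \<subseteq> \<E> \<and> (INF E\<in>\<E>. wdist v p E f W) = d \<longrightarrow> \<E> = F0"
    proof (intro allI impI)
      fix \<E> assume a: "z_filter \<E> \<and> F0 \<subseteq> \<E> \<and> (INF E\<in>\<E>. wdist v p E f W) = d"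
      then have "\<forall>E\<in>\<E>. d \<le> wdist v p E f W" using INFeq by blast
      then have "\<E> \<in> \<ZZ>" unfolding \<ZZ>_def using a by blast
      then show "\<E> = F0" using F0max a by blast
    qed
    from anti inf mx show ?thesis unfolding d_def by blast
  qed
qed

end
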